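(* Let $d \in \mathbb{N}$, $s \in \{1,\dots,d\}$, $M \geq 1$, $y \in [0,1]^d$, and $p \in (0,\infty]$. Then \[ \operatorname{supp} \vartheta_{M,y}^{(s)} \subset y + (M^{-1} [-1,1]^s \times \mathbb{R}^{d - s}) \] and \[ \frac12 \cdot (4s)^{-s/p}\cdot M^{-s/p}\le \| \vartheta_{M,y}^{(s)} \|_{L^p([0,1]^d)} \le 2^{s/p} \cdot M^{-s/p} . \]
   Context: Let $\varrho(x)=\max\{0,x\}$. For $M>0$, $\sigma\in\mathbb{R}$ define $\Lambda_{M,\sigma}:\mathbb{R}\to(-\infty,1]$ by $\Lambda_{M,\sigma}(t)=0$ if $t\le \sigma-\frac1M$ and $\Lambda_{M,\sigma}(t)=1-M|t-\sigma|$ if $t\ge\sigma-\frac1M$. For $s\in\{1,\dots,d\}$ and $y\in\mathbb{R}^d$ define $\Delta^{(s)}_{M,y}(x)=\big(\sum_{i=1}^s\Lambda_{M,y_i}(x_i)\big)-(s-1)$ and $\vartheta^{(s)}_{M,y}(x)=\varrho(\Delta^{(s)}_{M,y}(x))$ for $x\in\mathbb{R}^d$. For $p=\infty$, $s/p=0$. *)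

theory Defs
  imports "HOL-Analysis.Analysis" "HOL-Probability.Essential_Supremum"
begin

text \<open>Points of R^d are functions nat => real; coordinate i of the paper is index i-1 here
  (indices 0..d-1). Only coordinates below d are ever used.\<close>

definition relu :: "real \<Rightarrow> real" where
  "relu x = max 0 x"

definition Lam :: "real \<Rightarrow> real \<Rightarrow> real \<Rightarrow> real" where
  "Lam M \<sigma> t = (if t \<le> \<sigma> - 1 / M then 0 else 1 - M * \<bar>t - \<sigma>\<bar>)"

definition Delta :: "nat \<Rightarrow> real \<Rightarrow> (nat \<Rightarrow> real) \<Rightarrow> (nat \<Rightarrow> real) \<Rightarrow> real" where
  "Delta s M y x = (\<Sum>i<s. Lam M (y i) (x i)) - (real s - 1)"

definition theta :: "nat \<Rightarrow> real \<Rightarrow> (nat \<Rightarrow> real) \<Rightarrow> (nat \<Rightarrow> real) \<Rightarrow> real" where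
  "theta s M y x = relu (Delta s M y x)"

definition unit_cube :: "nat \<Rightarrow> (nat \<Rightarrow> real) set" where
  "unit_cube d = {x. \<forall>i<d. x i \<in> {0..1}}"

definition cube_measure :: "nat \<Rightarrow> (nat \<Rightarrow> real) measure" where
  "cube_measure d = restrict_space (PiM {..<d} (\<lambda>_. lborel)) (unit_cube d)"

definition Lp_norm :: "'a measure \<Rightarrow> ereal \<Rightarrow> ('a \<Rightarrow> real) \<Rightarrow> ereal" where
  "Lp_norm M p f =
     (if p = \<infinity> then esssup M (\<lambda>x. ereal \<bar>f x\<bar>)
      else ereal ((enn2real (\<integral>\<^sup>+ x. ennreal (\<bar>f x\<bar> powr real_of_ereal p) \<partial>M))
                   powr (1 / real_of_ereal p)))"

definition s_over_p :: "nat \<Rightarrow> ereal \<Rightarrow> real" where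
  "s_over_p s p = (if p = \<infinity> then 0 else real s / real_of_ereal p)"

end

theory Submission
  imports Defs
begin

lemma Lam_le1: "0 < M \<Longrightarrow> Lam M \<sigma> t \<le> 1"
  by (simp add: Lam_def)

lemma Delta_le1: "0 < M \<Longrightarrow> Delta s M y x \<le> 1"
proof -
  assume M: "0 < M"
  have "(\<Sum>i<s. Lam M (y i) (x i)) \<le> (\<Sum>i<s. 1)"
    by (rule sum_mono) (use M Lam_le1 in auto)
  then show ?thesis by (simp add: Delta_def)
qed

lemma theta_ge0: "0 \<le> theta s M y x"
  by (simp add: theta_def relu_def)

lemma theta_le1: "0 < M \<Longrightarrow> theta s M y x \<le> 1"
  using Delta_le1[of M s y x] by (simp add: theta_def relu_def)

lemma theta_nz:
  assumes M: "0 < M" and nz: "theta s M y x \<noteq> 0" and i: "i < s"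
  shows "\<bar>x i - y i\<bar> < 1 / M"
proof -
  have pos: "Lam M (y i) (x i) > 0"
  proof (rule ccontr)
    assume "\<not> Lam M (y i) (x i) > 0"
    hence le: "Lam M (y i) (x i) \<le> 0" by simp
    have "(\<Sum>j<s. Lam M (y j) (x j)) = Lam M (y i) (x i) + (\<Sum>j\<in>{..<s} - {i}. Lam M (y j) (x j))"
      using i by (subst sum.remove[of _ i]) auto
    also have "(\<Sum>j\<in>{..<s} - {i}. Lam M (y j) (x j)) \<le> (\<Sum>j\<in>{..<s} - {i}. 1)"
      by (rule sum_mono) (use M Lam_le1 in auto)
    also have "(\<Sum>j\<in>{..<s} - {i}. (1::real)) = real s - 1"
      using i by (simp add: of_nat_diff)
    finally have "Delta s M y x \<le> 0" using le by (simp add: Delta_def)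
    hence "theta s M y x = 0" by (simp add: theta_def relu_def)
    with nz show False by simp
  qed
  hence "\<not> x i \<le> y i - 1/M" and "1 - M * \<bar>x i - y i\<bar> > 0"
    by (auto simp: Lam_def split: if_splits)
  hence "M * \<bar>x i - y i\<bar> < 1" by simp
  thus ?thesis using M by (simp add: field_simps)
qed

lemma theta_half:
  assumes M: "0 < M" and s: "1 \<le> s" and cl: "\<forall>i<s. \<bar>x i - y i\<bar> \<le> 1 / (2 * real s * M)"
  shows "theta s M y x \<ge> 1/2"
proof -
  have "\<forall>i<s. Lam M (y i) (x i) \<ge> 1 - 1 / (2 * real s)"
  proof (intro allI impI)
    fix i assume i: "i < s"
    have a: "\<bar>x i - y i\<bar> \<le> 1 / (2 * real s * M)" using cl i by auto
    have "1 / (2 * real s * M) < 1 / M" using M s by (simp add: field_simps)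
    hence nle: "\<not> x i \<le> y i - 1/M" using a by auto
    have "M * \<bar>x i - y i\<bar> \<le> M * (1 / (2 * real s * M))"
      using a M by (intro mult_left_mono) auto
    also have "\<dots> = 1 / (2 * real s)" using M by simp
    finally show "Lam M (y i) (x i) \<ge> 1 - 1 / (2 * real s)"
      using nle by (simp add: Lam_def)
  qed
  hence "(\<Sum>i<s. Lam M (y i) (x i)) \<ge> (\<Sum>i<s. 1 - 1 / (2 * real s))"
    by (intro sum_mono) auto
  also have "(\<Sum>i<s. 1 - 1 / (2 * real s)) = real s - 1/2" using s by (simp add: field_simps)
  finally have "Delta s M y x \<ge> 1/2" by (simp add: Delta_def)
  thus ?thesis by (simp add: theta_def relu_def)
qed

lemma closed_box_S: "closed {x::nat\<Rightarrow>real. \<forall>i<s. x i - y i \<in> {-1/M..1/M}}"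
proof -
  have "{x::nat\<Rightarrow>real. \<forall>i<s. x i - y i \<in> {-1/M..1/M}} = (\<Inter>i<s. {x. x i - y i \<le> 1/M} \<inter> {x. -1/M \<le> x i - y i})"
    by auto
  also have "closed \<dots>"
    by (intro closed_INT ballI closed_Int closed_Collect_le continuous_intros continuous_on_product_coordinates)
  finally show ?thesis .
qed

lemma Lam_meas: "Lam M \<sigma> \<in> borel_measurable borel"
  unfolding Lam_def by measurable

lemma theta_meas:
  assumes "s \<le> d"
  shows "theta s M y \<in> borel_measurable (PiM {..<d} (\<lambda>_. lborel))"
proof -
  have [measurable]: "Lam M \<sigma> \<in> borel_measurable borel" for \<sigma> by (rule Lam_meas)
  have [measurable]: "relu \<in> borel_measurable borel" unfolding relu_def by measurable
  have "(\<lambda>x. Lam M (y i) (x i)) \<in> borel_measurable (PiM {..<d} (\<lambda>_. lborel))" if "i < s" for i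
  proof -
    have [measurable]: "i \<in> {..<d}" using that assms by auto
    show ?thesis by measurable
  qed
  hence "(\<lambda>x. \<Sum>i<s. Lam M (y i) (x i)) \<in> borel_measurable (PiM {..<d} (\<lambda>_. lborel))"
    by (intro borel_measurable_sum) auto
  thus ?thesis unfolding theta_def Delta_def by measurable
qed

lemma box_emeasure:
  fixes d :: nat and a b :: "nat \<Rightarrow> real"
  assumes "\<forall>i<d. a i \<le> b i"
  shows "emeasure (PiM {..<d} (\<lambda>_. lborel)) (PiE {..<d} (\<lambda>i. {a i..b i})) = ennreal (\<Prod>i<d. b i - a i)"
proof -
  have PSF: "product_sigma_finite (\<lambda>_::nat. lborel::real measure)"
    by (simp add: product_sigma_finite_def lborel.sigma_finite_measure_axioms)
  have "emeasure (PiM {..<d} (\<lambda>_. lborel)) (PiE {..<d} (\<lambda>i. {a i..b i})) = (\<Prod>i<d. emeasure lborel {a i..b i})"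
    using product_sigma_finite.emeasure_PiM[OF PSF, where I="{..<d}" and A="\<lambda>i. {a i..b i}"] by auto
  also have "\<dots> = (\<Prod>i<d. ennreal (b i - a i))"
    using assms by (intro prod.cong) auto
  also have "\<dots> = ennreal (\<Prod>i<d. b i - a i)"
    using assms by (intro prod_ennreal) auto
  finally show ?thesis .
qed

lemma cube_sets: "unit_cube d \<inter> space (PiM {..<d} (\<lambda>_. lborel)) \<in> sets (PiM {..<d} (\<lambda>_. lborel))"
proof -
  have "unit_cube d \<inter> space (PiM {..<d} (\<lambda>_. lborel)) = PiE {..<d} (\<lambda>_. {0..1::real})"
    by (auto simp: unit_cube_def space_PiM PiE_def Pi_def)
  thus ?thesis by simp
qed

lemma cube_int: "(\<integral>\<^sup>+x. f x \<partial>cube_measure d) = (\<integral>\<^sup>+x. f x * indicator (unit_cube d) x \<partial>PiM {..<d} (\<lambda>_. lborel))"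
  unfolding cube_measure_def by (rule nn_integral_restrict_space[OF cube_sets])

lemma minmax_r: fixes y r :: real assumes "0 \<le> y" "y \<le> 1" "0 < r" "r \<le> 1/2"
  shows "r \<le> min (y + r) 1 - max (y - r) 0"
  using assms by (simp add: min_def max_def)
lemma lower_int:
  assumes M: "1 \<le> M" and s: "1 \<le> s" "s \<le> d" and y: "\<forall>i<d. y i \<in> {0..1}"
  shows "emeasure (PiM {..<d} (\<lambda>_. lborel)) {x \<in> space (PiM {..<d} (\<lambda>_. lborel)). x \<in> unit_cube d \<and> theta s M y x \<ge> 1/2}
     \<ge> ennreal ((1 / (2 * real s * M))^s)"
proof -
  define r where "r = 1 / (2 * real s * M)"
  have Ms: "1 * 1 \<le> M * real s" by (rule mult_mono) (use M s in auto)
  have r0: "0 < r" using M s by (simp add: r_def)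
  have r1: "r \<le> 1/2" unfolding r_def by (rule frac_le) (use Ms in \<open>auto simp: mult.commute\<close>)
  define a where "a i = (if i < s then max (y i - r) 0 else 0)" for i
  define b where "b i = (if i < s then min (y i + r) 1 else 1)" for i
  let ?P = "PiM {..<d} (\<lambda>_. lborel)"
  let ?C = "PiE {..<d} (\<lambda>i. {a i..b i})"
  have rab: "r \<le> b i - a i" if "i < s" for i
  proof -
    have "i < d" using that s by auto
    hence "0 \<le> y i" "y i \<le> 1" using y by auto
    hence "r \<le> min (y i + r) 1 - max (y i - r) 0" using r0 r1 by (intro minmax_r)
    thus ?thesis using that by (simp add: a_def b_def)
  qed
  have ab: "\<forall>i<d. a i \<le> b i"
  proof (intro allI impI)
    fix i assume "i < d"
    show "a i \<le> b i"
    proof (cases "i < s")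
      case True thus ?thesis using rab[OF True] r0 by linarith
    qed (simp add: a_def b_def)
  qed
  have "?C \<subseteq> {x \<in> space ?P. x \<in> unit_cube d \<and> theta s M y x \<ge> 1/2}"
  proof
    fix x assume x: "x \<in> ?C"
    have "x \<in> space ?P" using x by (simp add: space_PiM PiE_iff)
    moreover have "x \<in> unit_cube d"
      unfolding unit_cube_def
    proof (intro CollectI allI impI)
      fix i assume "i < d"
      hence xi: "x i \<in> {a i..b i}" using x by (simp add: PiE_iff)
      have "0 \<le> a i" "b i \<le> 1" by (auto simp: a_def b_def)
      thus "x i \<in> {0..1}" using xi by auto
    qed
    moreover have "theta s M y x \<ge> 1/2"
    proof (rule theta_half)
      show "\<forall>i<s. \<bar>x i - y i\<bar> \<le> 1 / (2 * real s * M)"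
      proof (intro allI impI)
        fix i assume i: "i < s"
        hence "i < d" using s by auto
        hence "x i \<in> {a i..b i}" using x by (simp add: PiE_iff)
        thus "\<bar>x i - y i\<bar> \<le> 1 / (2 * real s * M)"
          unfolding r_def[symmetric] using i by (auto simp: a_def b_def abs_le_iff)
      qed
    qed (use M s in auto)
    ultimately show "x \<in> {x \<in> space ?P. x \<in> unit_cube d \<and> theta s M y x \<ge> 1/2}" by simp
  qed
  hence E1: "emeasure ?P ?C \<le> emeasure ?P {x \<in> space ?P. x \<in> unit_cube d \<and> theta s M y x \<ge> 1/2}"
  proof (rule emeasure_mono)
    have tm[measurable]: "theta s M y \<in> borel_measurable ?P" by (rule theta_meas[OF s(2)])
    have m2: "{x \<in> space ?P. 1/2 \<le> theta s M y x} \<in> sets ?P" by measurable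
    have eq:  "{x \<in> space ?P. x \<in> unit_cube d \<and> theta s M y x \<ge> 1/2} = (unit_cube d \<inter> space ?P) \<inter> {x \<in> space ?P. 1/2 \<le> theta s M y x}"
      by auto
    show "{x \<in> space ?P. x \<in> unit_cube d \<and> theta s M y x \<ge> 1/2} \<in> sets ?P"
      unfolding eq by (rule sets.Int[OF cube_sets m2])
  qed
  have E2: "emeasure ?P ?C = ennreal (\<Prod>i<d. b i - a i)"
    by (rule box_emeasure[OF ab])
  have E3: "(\<Prod>i<d. b i - a i) \<ge> r^s"
  proof -
    have "(\<Prod>i<d. b i - a i) \<ge> (\<Prod>i<d. if i < s then r else 1)"
    proof (rule prod_mono)
      fix i assume "i \<in> {..<d}"
      show "0 \<le> (if i < s then r else 1) \<and> (if i < s then r else 1) \<le> b i - a i"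
        using rab[of i] r0 by (simp add: a_def b_def)
    qed
    also have "(\<Prod>i<d. if i < s then r else 1) = (\<Prod>i\<in>{..<d} \<inter> {i. i < s}. r) * (\<Prod>i\<in>{..<d} \<inter> - {i. i < s}. 1)"
      by (rule prod.If_cases) simp
    also have "{..<d} \<inter> {i. i < s} = {..<s}" using s by auto
    finally show ?thesis by simp
  qed
  have "ennreal (r^s) \<le> ennreal (\<Prod>i<d. b i - a i)" by (rule ennreal_leI[OF E3])
  also have "\<dots> = emeasure ?P ?C" by (rule E2[symmetric])
  also note E1
  finally show ?thesis unfolding r_def .
qed
lemma upper_int:
  assumes M: "1 \<le> M" and s: "s \<le> d" and q: "0 < q"
  shows "(\<integral>\<^sup>+x. ennreal (\<bar>theta s M y x\<bar> powr q) \<partial>cube_measure d) \<le> ennreal ((2/M)^s)"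
proof -
  define a where "a i = (if i < s then y i - 1/M else 0)" for i
  define b where "b i = (if i < s then y i + 1/M else 1)" for i
  let ?P = "PiM {..<d} (\<lambda>_. lborel)"
  let ?B = "PiE {..<d} (\<lambda>i. {a i..b i})"
  have ab: "\<forall>i<d. a i \<le> b i" using M by (auto simp: a_def b_def)
  have "(\<integral>\<^sup>+x. ennreal (\<bar>theta s M y x\<bar> powr q) \<partial>cube_measure d)
      = (\<integral>\<^sup>+x. ennreal (\<bar>theta s M y x\<bar> powr q) * indicator (unit_cube d) x \<partial>?P)"
    by (rule cube_int)
  also have "\<dots> \<le> (\<integral>\<^sup>+x. indicator ?B x \<partial>?P)"
  proof (rule nn_integral_mono)
    fix x :: "nat \<Rightarrow> real" assume x: "x \<in> space ?P"
    show "ennreal (\<bar>theta s M y x\<bar> powr q) * indicator (unit_cube d) x \<le> indicator ?B x"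
    proof (cases "x \<in> unit_cube d \<and> theta s M y x \<noteq> 0")
      case nz: True
      have xB: "x \<in> ?B"
      proof -
        have "x i \<in> {a i..b i}" if i: "i < d" for i
        proof (cases "i < s")
          case True
          then show ?thesis using theta_nz[of M s y x i] M nz
            by (auto simp: a_def b_def abs_le_iff)
        next
          case False
          then show ?thesis using nz i by (auto simp: a_def b_def unit_cube_def)
        qed
        moreover have "x \<in> extensional {..<d}" using x by (simp add: space_PiM PiE_def)
        ultimately show ?thesis by (auto simp: PiE_def)
      qed
      have "\<bar>theta s M y x\<bar> powr q \<le> 1"
        using theta_ge0[of s M y x] theta_le1[of M s y x] M q
        by (simp add: powr_le1)
      then show ?thesis using xB nz by (simp add: indicator_def)
    next
      case False
      then show ?thesis by (auto simp: indicator_def)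
    qed
  qed
  also have "\<dots> = emeasure ?P ?B"
    by (rule nn_integral_indicator) simp
  also have "\<dots> = ennreal (\<Prod>i<d. b i - a i)"
    by (rule box_emeasure[OF ab])
  also have "(\<Prod>i<d. b i - a i) = (2/M)^s"
  proof -
    have "(\<Prod>i<d. b i - a i) = (\<Prod>i<d. if i < s then 2/M else 1)"
      by (intro prod.cong) (auto simp: a_def b_def)
    also have "\<dots> = (\<Prod>i\<in>{..<d} \<inter> {i. i < s}. 2/M) * (\<Prod>i\<in>{..<d} \<inter> - {i. i < s}. 1)"
      by (rule prod.If_cases) simp
    also have "{..<d} \<inter> {i. i < s} = {..<s}" using s by auto
    finally show ?thesis by simp
  qed
  finally show ?thesis .
qed

lemma E_sets:
  assumes "s \<le> d"
  shows "{x \<in> space (PiM {..<d} (\<lambda>_. lborel)). x \<in> unit_cube d \<and> theta s M y x \<ge> 1/2} \<in> sets (PiM {..<d} (\<lambda>_. lborel))"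
proof -
  let ?P = "PiM {..<d} (\<lambda>_. lborel)"
  have tm[measurable]: "theta s M y \<in> borel_measurable ?P" by (rule theta_meas[OF assms])
  have m2: "{x \<in> space ?P. 1/2 \<le> theta s M y x} \<in> sets ?P" by measurable
  have eq:  "{x \<in> space ?P. x \<in> unit_cube d \<and> theta s M y x \<ge> 1/2} = (unit_cube d \<inter> space ?P) \<inter> {x \<in> space ?P. 1/2 \<le> theta s M y x}"
    by auto
  show ?thesis unfolding eq by (rule sets.Int[OF cube_sets m2])
qed

lemma powr_upper:
  assumes M: "1 \<le> M" and q: "0 < q"
  shows "((2/M)^s) powr (1/q) = 2 powr (real s / q) * M powr (- (real s / q))"
proof -
  have "((2/M)^s) powr (1/q) = ((2/M) powr real s) powr (1/q)"
    using M by (simp add: powr_realpow)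
  also have "\<dots> = (2/M) powr (real s / q)" by (simp add: powr_powr)
  also have "\<dots> = 2 powr (real s / q) / M powr (real s / q)"
    using M by (simp add: powr_divide)
  also have "\<dots> = 2 powr (real s / q) * M powr (- (real s / q))"
    by (simp add: powr_minus_divide)
  finally show ?thesis .
qed

lemma powr_lower:
  assumes M: "1 \<le> M" and q: "0 < q" and s: "1 \<le> s"
  shows "1/2 * (4 * real s) powr (- (real s / q)) * M powr (- (real s / q))
       \<le> ((1/2) powr q * (1 / (2 * real s * M))^s) powr (1/q)"
proof -
  let ?e = "real s / q"
  have e0: "0 \<le> ?e" using q by simp
  have "((1/2) powr q * (1 / (2 * real s * M))^s) powr (1/q)
      = ((1/2) powr q) powr (1/q) * ((1 / (2 * real s * M))^s) powr (1/q)"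
    by (rule powr_mult)
  also have "((1/2::real) powr q) powr (1/q) = 1/2"
    using q by (simp add: powr_powr)
  also have "((1 / (2 * real s * M))^s) powr (1/q) = ((1 / (2 * real s * M)) powr real s) powr (1/q)"
    using M s by (simp add: powr_realpow)
  also have "\<dots> = (1 / (2 * real s * M)) powr ?e" by (simp add: powr_powr)
  also have "\<dots> = (2 * real s) powr (- ?e) * M powr (- ?e)"
    using M s by (simp add: powr_divide powr_minus_divide powr_mult)
  finally have eq: "((1/2) powr q * (1 / (2 * real s * M))^s) powr (1/q) = 1/2 * ((2 * real s) powr (- ?e) * M powr (- ?e))" .
  have "(4 * real s) powr (- ?e) \<le> (2 * real s) powr (- ?e)"
    by (rule powr_mono2') (use e0 s in auto)
  hence "1/2 * (4 * real s) powr (- ?e) * M powr (- ?e) \<le> 1/2 * (2 * real s) powr (- ?e) * M powr (- ?e)"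
    by (intro mult_right_mono mult_left_mono) auto
  thus ?thesis unfolding eq by (simp add: mult.assoc)
qed

theorem lemma2p3:
  fixes d s :: nat and M :: real and y :: "nat \<Rightarrow> real" and p :: ereal
  assumes "1 \<le> s" and "s \<le> d"
    and "1 \<le> M"
    and "\<forall>i<d. y i \<in> {0..1}"
    and "0 < p"
  shows "closure {x. theta s M y x \<noteq> 0} \<subseteq> {x. \<forall>i<s. x i - y i \<in> {-1/M..1/M}}
     \<and> ereal (1/2 * (4 * real s) powr (- s_over_p s p) * M powr (- s_over_p s p))
         \<le> Lp_norm (cube_measure d) p (theta s M y)
     \<and> Lp_norm (cube_measure d) p (theta s M y)
         \<le> ereal (2 powr (s_over_p s p) * M powr (- s_over_p s p))"
proof -
  note s = assms(1,2) and M = assms(3) and y = assms(4) and p = assms(5)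
  have M0: "0 < M" using M by simp
  let ?P = "PiM {..<d} (\<lambda>_. lborel)"
  let ?E = "{x \<in> space ?P. x \<in> unit_cube d \<and> theta s M y x \<ge> 1/2}"
  have Esets: "?E \<in> sets ?P" by (rule E_sets[OF s(2)])
  have Emeas: "emeasure ?P ?E \<ge> ennreal ((1 / (2 * real s * M))^s)"
    by (rule lower_int[OF M s y])
  have part1: "closure {x. theta s M y x \<noteq> 0} \<subseteq> {x. \<forall>i<s. x i - y i \<in> {-1/M..1/M}}"
  proof (rule closure_minimal[OF _ closed_box_S])
    show "{x. theta s M y x \<noteq> 0} \<subseteq> {x. \<forall>i<s. x i - y i \<in> {-1/M..1/M}}"
    proof safe
      fix x i assume "theta s M y x \<noteq> 0" "i < s"
      hence "\<bar>x i - y i\<bar> < 1 / M" using theta_nz[OF M0] by blast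
      thus "x i - y i \<in> {-1/M..1/M}" by (auto simp: abs_less_iff)
    qed
  qed
  have part23: "ereal (1/2 * (4 * real s) powr (- s_over_p s p) * M powr (- s_over_p s p))
         \<le> Lp_norm (cube_measure d) p (theta s M y)
     \<and> Lp_norm (cube_measure d) p (theta s M y)
         \<le> ereal (2 powr (s_over_p s p) * M powr (- s_over_p s p))"
  proof (cases "p = \<infinity>")
    case True
    let ?f = "\<lambda>x. ereal \<bar>theta s M y x\<bar>"
    have tm: "theta s M y \<in> borel_measurable (cube_measure d)"
      unfolding cube_measure_def by (rule measurable_restrict_space1[OF theta_meas[OF s(2)]])
    have fm: "?f \<in> borel_measurable (cube_measure d)"
      using tm by measurable
    have up: "esssup (cube_measure d) ?f \<le> 1"
    proof (rule esssup_I[OF fm])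
      show "AE x in cube_measure d. ?f x \<le> 1"
        using theta_ge0[of s M y] theta_le1[OF M0, of s y] by (intro AE_I2) auto
    qed
    have low: "ereal (1/2) \<le> esssup (cube_measure d) ?f"
    proof (rule ccontr)
      assume "\<not> ereal (1/2) \<le> esssup (cube_measure d) ?f"
      hence lt: "esssup (cube_measure d) ?f < ereal (1/2)" by simp
      have "AE x in cube_measure d. ?f x < ereal (1/2)"
        using esssup_AE[of ?f "cube_measure d"]
      proof (rule eventually_mono)
        fix x assume "?f x \<le> esssup (cube_measure d) ?f"
        thus "?f x < ereal (1/2)" using lt by (rule le_less_trans)
      qed
      hence "AE x in cube_measure d. indicator {x. 1/2 \<le> theta s M y x} x = (0::ennreal)"
        by (auto elim!: eventually_mono simp: indicator_def)
      hence "(\<integral>\<^sup>+x. indicator {x. 1/2 \<le> theta s M y x} x \<partial>cube_measure d) = (\<integral>\<^sup>+x. 0 \<partial>cube_measure d)"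
        by (rule nn_integral_cong_AE)
      hence z: "(\<integral>\<^sup>+x. indicator {x. 1/2 \<le> theta s M y x} x \<partial>cube_measure d) = 0" by simp
      have "(\<integral>\<^sup>+x. indicator {x. 1/2 \<le> theta s M y x} x \<partial>cube_measure d)
          = (\<integral>\<^sup>+x. indicator {x. 1/2 \<le> theta s M y x} x * indicator (unit_cube d) x \<partial>?P)"
        by (rule cube_int)
      also have "\<dots> = (\<integral>\<^sup>+x. indicator ?E x \<partial>?P)"
        by (rule nn_integral_cong) (auto simp: indicator_def)
      also have "\<dots> = emeasure ?P ?E" using Esets by simp
      finally have E0: "emeasure ?P ?E = 0" using z by simp
      have "0 < (1 / (2 * real s * M))^s" using M0 s by simp
      hence "0 < ennreal ((1 / (2 * real s * M))^s)" by simp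
      also note Emeas
      finally show False unfolding E0 by simp
    qed
    have "s_over_p s p = 0" using True by (simp add: s_over_p_def)
    moreover have "Lp_norm (cube_measure d) p (theta s M y) = esssup (cube_measure d) ?f"
      using True by (simp add: Lp_norm_def)
    ultimately show ?thesis using up low M0 s by (simp add: one_ereal_def)
  next
    case False
    obtain q where pq: "p = ereal q" using False p by (cases p) auto
    have q: "0 < q" using p pq by simp
    have sop: "s_over_p s p = real s / q" using pq by (simp add: s_over_p_def)
    let ?I = "\<integral>\<^sup>+x. ennreal (\<bar>theta s M y x\<bar> powr q) \<partial>cube_measure d"
    have LP: "Lp_norm (cube_measure d) p (theta s M y) = ereal (enn2real ?I powr (1/q))"
      using pq by (simp add: Lp_norm_def)
    have Iup: "?I \<le> ennreal ((2/M)^s)" by (rule upper_int[OF M s(2) q])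
    have Ilow: "ennreal ((1/2) powr q * (1 / (2 * real s * M))^s) \<le> ?I"
    proof -
      have "ennreal ((1/2) powr q * (1 / (2 * real s * M))^s)
          = ennreal ((1/2) powr q) * ennreal ((1 / (2 * real s * M))^s)"
        by (rule ennreal_mult) (use M0 in auto)
      also have "\<dots> \<le> ennreal ((1/2) powr q) * emeasure ?P ?E"
        by (rule mult_left_mono[OF Emeas]) simp
      also have "\<dots> = (\<integral>\<^sup>+x. ennreal ((1/2) powr q) * indicator ?E x \<partial>?P)"
        by (rule nn_integral_cmult_indicator[OF Esets, symmetric])
      also have "\<dots> \<le> (\<integral>\<^sup>+x. ennreal (\<bar>theta s M y x\<bar> powr q) * indicator (unit_cube d) x \<partial>?P)"
      proof (rule nn_integral_mono)
        fix x :: "nat \<Rightarrow> real" assume x: "x \<in> space ?P"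
        show "ennreal ((1/2) powr q) * indicator ?E x \<le> ennreal (\<bar>theta s M y x\<bar> powr q) * indicator (unit_cube d) x"
        proof (cases "x \<in> ?E")
          case True
          hence c: "x \<in> unit_cube d" "1/2 \<le> theta s M y x" by auto
          have "(1/2) powr q \<le> \<bar>theta s M y x\<bar> powr q"
            by (rule powr_mono2) (use q c in auto)
          thus ?thesis using True c by (simp add: ennreal_leI)
        qed simp
      qed
      also have "\<dots> = ?I" by (rule cube_int[symmetric])
      finally show ?thesis .
    qed
    have Ifin: "?I < top" using Iup by (simp add: le_less_trans)
    have r1: "enn2real ?I \<le> (2/M)^s"
      using enn2real_mono[OF Iup] M0 by simp
    have r2: "(1/2) powr q * (1 / (2 * real s * M))^s \<le> enn2real ?I"
      using enn2real_mono[OF Ilow Ifin] M0 by simp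
    have "enn2real ?I powr (1/q) \<le> ((2/M)^s) powr (1/q)"
      by (rule powr_mono2) (use q r1 in auto)
    also have "\<dots> = 2 powr (real s / q) * M powr (- (real s / q))"
      by (rule powr_upper[OF M q])
    finally have U: "enn2real ?I powr (1/q) \<le> 2 powr (real s / q) * M powr (- (real s / q))" .
    have "1/2 * (4 * real s) powr (- (real s / q)) * M powr (- (real s / q))
       \<le> ((1/2) powr q * (1 / (2 * real s * M))^s) powr (1/q)"
      by (rule powr_lower[OF M q s(1)])
    also have "\<dots> \<le> enn2real ?I powr (1/q)"
      by (rule powr_mono2) (use q r2 M0 in auto)
    finally have L: "1/2 * (4 * real s) powr (- (real s / q)) * M powr (- (real s / q)) \<le> enn2real ?I powr (1/q)" .
    show ?thesis unfolding LP sop using U L by simp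
  qed
  show ?thesis using part1 part23 by blast
qed

end
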